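(* Let $(\mathfrak g,[-,-])$ be a Lie algebra, $(\rho,V)$ a representation, and $T:V\to\mathfrak g$ an admissible anti-$\mathcal O$-operator of $(\mathfrak g,[-,-])$ associated to $(\rho,V)$. Then $T$ is strong. Moreover, $(V,\circ)$ with $u\circ v=-\rho(T(u))v$ is an admissible Novikov algebra.
   Context: All vector spaces are finite-dimensional over a field $\mathbb F$ of characteristic $0$. A linear map $T:V\to\mathfrak g$ is an anti-$\mathcal O$-operator associated to $(\rho,V)$ if $[T(u),T(v)]=T(\rho(T(v))u-\rho(T(u))v)$ for all $u,v\in V$; it is strong if $\rho([T(u),T(v)])w+\rho([T(v),T(w)])u+\rho([T(w),T(u)])v=0$ for all $u,v,w$; it is admissible if $2\rho(T(u))\rho(T(v))w-2\rho(T(u))\rho(T(w))v=\rho(T(\rho(T(u))v))w-\rho(T(\rho(T(u))w))v$ for all $u,v,w\in V$. For a bilinear operation $\circ$ write $[x,y]=x\circ y-y\circ x$; an admissible Novikov algebra is $(A,\circ)$ with $x\circ(y\circ z)-y\circ(x\circ z)=[y,x]\circ z$ and $2x\circ[y,z]=(x\circ y)\circ z-(x\circ z)\circ y$ for all $x,y,z$. *)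

theory Defs
  imports Main "HOL.Vector_Spaces"
begin

definition fd_vector_space :: "('k::field \<Rightarrow> 'v::ab_group_add \<Rightarrow> 'v) \<Rightarrow> bool" where
  "fd_vector_space sc \<longleftrightarrow> vector_space sc \<and> (\<exists>B. finite B \<and> module.span sc B = UNIV)"

definition bilinear_op :: "('k::field \<Rightarrow> 'v::ab_group_add \<Rightarrow> 'v) \<Rightarrow> ('v \<Rightarrow> 'v \<Rightarrow> 'v) \<Rightarrow> bool" where
  "bilinear_op sc m \<longleftrightarrow> (\<forall>x. Vector_Spaces.linear sc sc (m x)) \<and> (\<forall>y. Vector_Spaces.linear sc sc (\<lambda>x. m x y))"

definition lie_algebra :: "('k::field \<Rightarrow> 'g::ab_group_add \<Rightarrow> 'g) \<Rightarrow> ('g \<Rightarrow> 'g \<Rightarrow> 'g) \<Rightarrow> bool" where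
  "lie_algebra sg br \<longleftrightarrow> fd_vector_space sg \<and> bilinear_op sg br
     \<and> (\<forall>x. br x x = 0)
     \<and> (\<forall>x y z. br x (br y z) + br y (br z x) + br z (br x y) = 0)"

definition lie_representation ::
  "('k::field \<Rightarrow> 'g::ab_group_add \<Rightarrow> 'g) \<Rightarrow> ('g \<Rightarrow> 'g \<Rightarrow> 'g) \<Rightarrow>
   ('k \<Rightarrow> 'v::ab_group_add \<Rightarrow> 'v) \<Rightarrow> ('g \<Rightarrow> 'v \<Rightarrow> 'v) \<Rightarrow> bool" where
  "lie_representation sg br sv rho \<longleftrightarrow> fd_vector_space sv
     \<and> (\<forall>x. Vector_Spaces.linear sv sv (rho x))
     \<and> (\<forall>x y v. rho (x + y) v = rho x v + rho y v)
     \<and> (\<forall>c x v. rho (sg c x) v = sv c (rho x v))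
     \<and> (\<forall>x y v. rho (br x y) v = rho x (rho y v) - rho y (rho x v))"

definition anti_O_operator ::
  "('k::field \<Rightarrow> 'g::ab_group_add \<Rightarrow> 'g) \<Rightarrow> ('g \<Rightarrow> 'g \<Rightarrow> 'g) \<Rightarrow>
   ('k \<Rightarrow> 'v::ab_group_add \<Rightarrow> 'v) \<Rightarrow> ('g \<Rightarrow> 'v \<Rightarrow> 'v) \<Rightarrow> ('v \<Rightarrow> 'g) \<Rightarrow> bool" where
  "anti_O_operator sg br sv rho T \<longleftrightarrow> Vector_Spaces.linear sv sg T
     \<and> (\<forall>u v. br (T u) (T v) = T (rho (T v) u - rho (T u) v))"

definition strong_op :: "('g \<Rightarrow> 'g \<Rightarrow> 'g) \<Rightarrow> ('g \<Rightarrow> 'v::ab_group_add \<Rightarrow> 'v) \<Rightarrow> ('v \<Rightarrow> 'g) \<Rightarrow> bool" where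
  "strong_op br rho T \<longleftrightarrow> (\<forall>u v w.
     rho (br (T u) (T v)) w + rho (br (T v) (T w)) u + rho (br (T w) (T u)) v = 0)"

(* 2a is written a + a *)
definition admissible_op :: "('g \<Rightarrow> 'v::ab_group_add \<Rightarrow> 'v) \<Rightarrow> ('v \<Rightarrow> 'g) \<Rightarrow> bool" where
  "admissible_op rho T \<longleftrightarrow> (\<forall>u v w.
     (rho (T u) (rho (T v) w) + rho (T u) (rho (T v) w))
       - (rho (T u) (rho (T w) v) + rho (T u) (rho (T w) v))
     = rho (T (rho (T u) v)) w - rho (T (rho (T u) w)) v)"

definition commutator_of :: "('a::ab_group_add \<Rightarrow> 'a \<Rightarrow> 'a) \<Rightarrow> 'a \<Rightarrow> 'a \<Rightarrow> 'a" where
  "commutator_of m x y = m x y - m y x"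

definition admissible_novikov :: "('k::field \<Rightarrow> 'a::ab_group_add \<Rightarrow> 'a) \<Rightarrow> ('a \<Rightarrow> 'a \<Rightarrow> 'a) \<Rightarrow> bool" where
  "admissible_novikov sc m \<longleftrightarrow> bilinear_op sc m
     \<and> (\<forall>x y z. m x (m y z) - m y (m x z) = m (commutator_of m y x) z)
     \<and> (\<forall>x y z. m x (commutator_of m y z) + m x (commutator_of m y z)
                 = m (m x y) z - m (m x z) y)"

end

theory Submission
  imports Defs
begin

lemma add_diff_hom:
  fixes f :: "'a::ab_group_add \<Rightarrow> 'b::ab_group_add"
  assumes "\<And>x y. f (x + y) = f x + f y"
  shows "f (x - y) = f x - f y"
proof -
  have "f x = f ((x - y) + y)" by simp
  also have "\<dots> = f (x - y) + f y" by (rule assms)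
  finally show ?thesis by (simp add: algebra_simps)
qed

lemma three_zero:
  fixes sv :: "'k::field_char_0 \<Rightarrow> 'v::ab_group_add \<Rightarrow> 'v"
    and S :: 'v
  assumes vs: "vector_space sv" and h: "S + S + S = 0"
  shows "S = 0"
proof -
  interpret vector_space sv by (rule vs)
  have "sv 3 S = sv (1 + 1 + 1) S" by simp
  also have "\<dots> = S + S + S" by (simp only: scale_left_distrib scale_one)
  finally have "sv 3 S = 0" using h by simp
  then have "sv (1/3) (sv 3 S) = 0" by simp
  then show ?thesis by simp
qed

lemma abs3:
  fixes b1 b2 b3 b4 b5 b6 a1 a2 a3 a4 a5 a6 E :: "'v::ab_group_add"
  assumes "b1 - b2 = a2 - a1" "b3 - b4 = a4 - a3" "b5 - b6 = a6 - a5"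
    "(b1 + b1) - (b6 + b6) = a1 - a6"
    "(b3 + b3) - (b2 + b2) = a3 - a2"
    "(b5 + b5) - (b4 + b4) = a5 - a4"
    "E = (b1 - b2) + (b3 - b4) + (b5 - b6)"
  shows "E + E + E = 0"
proof -
  have 1: "E = (a2 - a1) + (a4 - a3) + (a6 - a5)" using assms(1-3,7) by simp
  have 2: "E + E = ((b1 + b1) - (b6 + b6)) + ((b3 + b3) - (b2 + b2)) + ((b5 + b5) - (b4 + b4))"
    unfolding assms(7) by (simp add: algebra_simps)
  also have "\<dots> = (a1 - a6) + (a3 - a2) + (a5 - a4)" using assms(4-6) by simp
  finally have "E + E = (a1 - a6) + (a3 - a2) + (a5 - a4)" .
  then have "E + (E + E) = (a2 - a1) + (a4 - a3) + (a6 - a5) + ((a1 - a6) + (a3 - a2) + (a5 - a4))"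
    using 1 by simp
  also have "\<dots> = 0" by (simp add: algebra_simps)
  finally show ?thesis by (simp add: add.assoc)
qed

theorem proposition3p15:
  fixes sg :: "'k::field_char_0 \<Rightarrow> 'g::ab_group_add \<Rightarrow> 'g"
    and br :: "'g \<Rightarrow> 'g \<Rightarrow> 'g"
    and sv :: "'k \<Rightarrow> 'v::ab_group_add \<Rightarrow> 'v"
    and rho :: "'g \<Rightarrow> 'v \<Rightarrow> 'v"
    and T :: "'v \<Rightarrow> 'g"
  assumes "lie_algebra sg br"
    and "lie_representation sg br sv rho"
    and "anti_O_operator sg br sv rho T"
    and "admissible_op rho T"
  shows "strong_op br rho T \<and> admissible_novikov sv (\<lambda>u v. - rho (T u) v)"
proof -
  have vs: "vector_space sv" using assms(2) unfolding lie_representation_def fd_vector_space_def by blast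
  have rlin: "\<And>x. Vector_Spaces.linear sv sv (rho x)" using assms(2) unfolding lie_representation_def by blast
  have radd: "\<And>x a b. rho x (a + b) = rho x a + rho x b" using rlin unfolding linear_iff by blast
  have rsc: "\<And>x c a. rho x (sv c a) = sv c (rho x a)" using rlin unfolding linear_iff by blast
  have rdiff: "\<And>x a b. rho x (a - b) = rho x a - rho x b" by (rule add_diff_hom, rule radd)
  have radd1: "\<And>x y v. rho (x + y) v = rho x v + rho y v" using assms(2) unfolding lie_representation_def by blast
  have rdiff1: "\<And>x y v. rho (x - y) v = rho x v - rho y v"
    using add_diff_hom[where f="\<lambda>x. rho x v" for v] radd1 by blast
  have rbr: "\<And>x y v. rho (br x y) v = rho x (rho y v) - rho y (rho x v)" using assms(2) unfolding lie_representation_def by blast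
  have Tlin: "Vector_Spaces.linear sv sg T" using assms(3) unfolding anti_O_operator_def by blast
  have Tadd: "\<And>a b. T (a + b) = T a + T b" using Tlin unfolding linear_iff by blast
  have Tdiff: "\<And>a b. T (a - b) = T a - T b" by (rule add_diff_hom, rule Tadd)
  have anti: "\<And>u v. br (T u) (T v) = T (rho (T v) u - rho (T u) v)" using assms(3) unfolding anti_O_operator_def by blast
  have adm: "\<And>u v w. (rho (T u) (rho (T v) w) + rho (T u) (rho (T v) w))
       - (rho (T u) (rho (T w) v) + rho (T u) (rho (T w) v))
     = rho (T (rho (T u) v)) w - rho (T (rho (T u) w)) v" using assms(4) unfolding admissible_op_def by blast
  have key: "\<And>u v w. rho (T u) (rho (T v) w) - rho (T v) (rho (T u) w)
      = rho (T (rho (T v) u)) w - rho (T (rho (T u) v)) w"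
    by (metis anti rbr Tdiff rdiff1)
  have strong: "strong_op br rho T"
    unfolding strong_op_def
  proof (intro allI)
    fix u v w
    let ?S = "rho (br (T u) (T v)) w + rho (br (T v) (T w)) u + rho (br (T w) (T u)) v"
    have e1: "?S = (rho (T u) (rho (T v) w) - rho (T v) (rho (T u) w))
       + (rho (T v) (rho (T w) u) - rho (T w) (rho (T v) u))
       + (rho (T w) (rho (T u) v) - rho (T u) (rho (T w) v))" by (simp add: rbr)
    note k1 = key[of u v w] and k2 = key[of v w u] and k3 = key[of w u v]
    note a1 = adm[of u v w] and a2 = adm[of v w u] and a3 = adm[of w u v]
    have "?S + ?S + ?S = 0"
      by (rule abs3[OF k1 k2 k3 a1 a2 a3 e1])
    then show "?S = 0" by (rule three_zero[OF vs])
  qed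
  have Tneg: "\<And>a. T (- a) = - T a" using Tdiff[of 0] Tadd[of 0 0] by simp
  have rneg: "\<And>x a. rho x (- a) = - rho x a" using rdiff[of _ 0] radd[of _ 0 0] by simp
  have rneg1: "\<And>x a. rho (- x) a = - rho x a" using rdiff1[of 0] radd1[of 0 0] by simp
  have Tsc: "\<And>c a. T (sv c a) = sg c (T a)" using Tlin unfolding linear_iff by blast
  have rsc1: "\<And>c x v. rho (sg c x) v = sv c (rho x v)" using assms(2) unfolding lie_representation_def by blast
  have smr: "\<And>c a. sv c (- a) = - sv c a" 
  proof -
    fix c a
    have sadd: "\<And>x y. sv c (x + y) = sv c x + sv c y" using vs unfolding vector_space_def by blast
    show "sv c (- a) = - sv c a" using add_diff_hom[of "sv c", OF sadd, of 0 a] sadd[of 0 0] by simp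
  qed
  have bil: "bilinear_op sv (\<lambda>u v. - rho (T u) v)"
    unfolding bilinear_op_def linear_iff
    by (auto simp: vs radd rsc Tadd radd1 Tsc rsc1 smr)
  have n1: "\<And>x y z. - rho (T x) (- rho (T y) z) - - rho (T y) (- rho (T x) z)
     = - rho (T (commutator_of (\<lambda>u v. - rho (T u) v) y x)) z"
    unfolding commutator_of_def using key by (simp add: Tdiff Tneg rneg rneg1 rdiff1 algebra_simps)
  have n2: "\<And>x y z. - rho (T x) (commutator_of (\<lambda>u v. - rho (T u) v) y z) + - rho (T x) (commutator_of (\<lambda>u v. - rho (T u) v) y z)
     = - rho (T (- rho (T x) y)) z - - rho (T (- rho (T x) z)) y"
    unfolding commutator_of_def using adm by (simp add: Tdiff Tneg rneg rneg1 rdiff rdiff1 algebra_simps)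
  show ?thesis using strong bil n1 n2 unfolding admissible_novikov_def by blast
qed

end
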